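(* Let $\mathcal C\subseteq\mathbf F_q^n$ be a formally self-orthogonal nonzero linear $[n,k,d]$ code with $2d\le n+1$. Write $p_i=\dim\mathcal P_i$ and $f_i=\dim\mathcal F_i$. Then for all $0\le i\le j\le n$, $$(p_j-p_i)+(f_i-f_j)\le j-i.$$ As a consequence, $\Delta[\mathcal C]\le\lfloor (n-2d+2)/2\rfloor$.
   Context: The coordinate order is fixed. Define $\mathcal P_0=\mathcal F_n=0$, $\mathcal P_n=\mathcal F_0=\mathcal C$, and for $1\le i\le n-1$, $\mathcal P_i=\{(c_1,\dots,c_i):(c_1,\dots,c_i,0,\dots,0)\in\mathcal C\}$ and $\mathcal F_i=\{(c_{i+1},\dots,c_n):(0,\dots,0,c_{i+1},\dots,c_n)\in\mathcal C\}$. $\mathcal C$ is formally self-orthogonal if there is an $n$-tuple $\mathbf x$ of nonzero elements of $\mathbf F_q$ with $\mathcal C\subseteq\mathbf x*\mathcal C^\perp$, where $*$ is coordinate-wise multiplication. Set $\Delta_i=p_i+f_i$ and $\Delta(\mathcal C)=\min_{0\le i\le n}\Delta_i$. Then $\Delta[\mathcal C]$ is the maximum of $\Delta(\mathcal C')$ over all codes $\mathcal C'$ obtained from $\mathcal C$ by permuting coordinates. *)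

theory Defs
  imports Complex_Main "HOL-Library.Function_Algebras" "HOL-Combinatorics.Permutations"
begin

text \<open>Words of length n over a finite field 'a are modelled as functions
  nat => 'a vanishing outside the coordinate set {0..<n} (coordinate c_(i+1) of
  the paper is c i here).\<close>

definition cscale :: "'a::field \<Rightarrow> (nat \<Rightarrow> 'a) \<Rightarrow> (nat \<Rightarrow> 'a)" where
  "cscale c v = (\<lambda>i. c * v i)"

global_interpretation fvec: vector_space "cscale :: 'a::field \<Rightarrow> (nat \<Rightarrow> 'a) \<Rightarrow> (nat \<Rightarrow> 'a)"
  by unfold_locales (auto simp: cscale_def algebra_simps)

definition words :: "nat \<Rightarrow> (nat \<Rightarrow> 'a::zero) set" where
  "words n = {v. \<forall>i\<ge>n. v i = 0}"

definition linear_code :: "nat \<Rightarrow> (nat \<Rightarrow> 'a::field) set \<Rightarrow> bool" where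
  "linear_code n C \<longleftrightarrow> C \<subseteq> words n \<and> fvec.subspace C"

definition cdim :: "(nat \<Rightarrow> 'a::field) set \<Rightarrow> nat" where
  "cdim C = fvec.dim C"

definition weight :: "nat \<Rightarrow> (nat \<Rightarrow> 'a::zero) \<Rightarrow> nat" where
  "weight n c = card {i. i < n \<and> c i \<noteq> 0}"

definition min_dist :: "nat \<Rightarrow> (nat \<Rightarrow> 'a::zero) set \<Rightarrow> nat" where
  "min_dist n C = Min {weight n c | c. c \<in> C \<and> c \<noteq> 0}"

definition dual_code :: "nat \<Rightarrow> (nat \<Rightarrow> 'a::field) set \<Rightarrow> (nat \<Rightarrow> 'a) set" where
  "dual_code n C = {v \<in> words n. \<forall>c\<in>C. (\<Sum>i<n. v i * c i) = 0}"

definition formally_self_orthogonal :: "nat \<Rightarrow> (nat \<Rightarrow> 'a::field) set \<Rightarrow> bool" where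
  "formally_self_orthogonal n C \<longleftrightarrow>
     (\<exists>x::nat \<Rightarrow> 'a. (\<forall>i<n. x i \<noteq> 0) \<and>
        C \<subseteq> (\<lambda>v. (\<lambda>i. x i * v i)) ` dual_code n C)"

definition prefix_code :: "nat \<Rightarrow> (nat \<Rightarrow> 'a::zero) set \<Rightarrow> nat \<Rightarrow> (nat \<Rightarrow> 'a) set" where
  "prefix_code n C i = {c. c \<in> C \<and> (\<forall>j. i \<le> j \<longrightarrow> c j = 0)}"

definition suffix_code :: "nat \<Rightarrow> (nat \<Rightarrow> 'a::zero) set \<Rightarrow> nat \<Rightarrow> (nat \<Rightarrow> 'a) set" where
  "suffix_code n C i = (\<lambda>c. (\<lambda>j. c (j + i))) ` {c. c \<in> C \<and> (\<forall>j<i. c j = 0)}"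

definition p_dim :: "nat \<Rightarrow> (nat \<Rightarrow> 'a::field) set \<Rightarrow> nat \<Rightarrow> nat" where
  "p_dim n C i = cdim (prefix_code n C i)"

definition f_dim :: "nat \<Rightarrow> (nat \<Rightarrow> 'a::field) set \<Rightarrow> nat \<Rightarrow> nat" where
  "f_dim n C i = cdim (suffix_code n C i)"

definition Delta :: "nat \<Rightarrow> (nat \<Rightarrow> 'a::field) set \<Rightarrow> nat" where
  "Delta n C = Min {p_dim n C i + f_dim n C i | i. i \<le> n}"

definition permute_code :: "(nat \<Rightarrow> nat) \<Rightarrow> (nat \<Rightarrow> 'a) set \<Rightarrow> (nat \<Rightarrow> 'a) set" where
  "permute_code \<sigma> C = (\<lambda>c. c \<circ> \<sigma>) ` C"

definition Delta_perm :: "nat \<Rightarrow> (nat \<Rightarrow> 'a::field) set \<Rightarrow> nat" where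
  "Delta_perm n C = Max {Delta n (permute_code \<sigma> C) | \<sigma>. \<sigma> permutes {0..<n}}"

end

theory Submission
  imports Defs "HOL-Library.Cardinality"
begin

definition grp :: "(nat \<Rightarrow> 'a::ab_group_add) set \<Rightarrow> bool" where
  "grp S \<longleftrightarrow> 0 \<in> S \<and> (\<forall>x\<in>S. \<forall>y\<in>S. x - y \<in> S)"

lemma finite_words: "finite (words n :: (nat \<Rightarrow> 'a::{zero,finite}) set)"
proof -
  have "words n \<subseteq> (\<lambda>g. \<lambda>i. if i < n then g i else 0) ` ({0..<n} \<rightarrow>\<^sub>E (UNIV::'a set))"
  proof
    fix v :: "nat \<Rightarrow> 'a" assume "v \<in> words n"
    then have "v = (\<lambda>i. if i < n then restrict v {0..<n} i else 0)"
      by (auto simp: words_def fun_eq_iff not_less)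
    moreover have "restrict v {0..<n} \<in> {0..<n} \<rightarrow>\<^sub>E UNIV" by auto
    ultimately show "v \<in> (\<lambda>g. \<lambda>i. if i < n then g i else 0) ` ({0..<n} \<rightarrow>\<^sub>E (UNIV::'a set))" by blast
  qed
  then show ?thesis by (rule finite_subset) (intro finite_imageI finite_PiE; simp)
qed

lemma card_span_indep:
  fixes B :: "(nat \<Rightarrow> 'a::{field,finite}) set"
  assumes "finite B" "fvec.independent B"
  shows "card (fvec.span B) = CARD('a) ^ card B"
  using assms
proof (induction B rule: finite_induct)
  case empty
  then show ?case by simp
next
  case (insert b B)
  have indB: "fvec.independent B" and nb: "b \<notin> fvec.span B"
    using insert.prems insert.hyps by (auto simp: fvec.independent_insert)
  define g where "g = (\<lambda>(k::'a, v). cscale k b + v)"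
  have "bij_betw g (UNIV \<times> fvec.span B) (fvec.span (insert b B))"
    unfolding bij_betw_def
  proof
    show "inj_on g (UNIV \<times> fvec.span B)"
    proof (rule inj_onI, clarsimp simp: g_def)
      fix k v k' v' assume v: "v \<in> fvec.span B" and v': "v' \<in> fvec.span B"
        and eq: "cscale k b + v = cscale k' b + v'"
      show "k = k' \<and> v = v'"
      proof (cases "k = k'")
        case True then show ?thesis using eq by simp
      next
        case False
        have "cscale (k - k') b = v' - v" using eq
          by (auto simp: cscale_def fun_eq_iff algebra_simps)
        then have beq: "\<And>x. (k - k') * b x = v' x - v x" by (simp add: cscale_def fun_eq_iff)
        have "b = cscale (inverse (k - k')) (v' - v)"
        proof (rule ext)
          fix x
          show "b x = cscale (inverse (k - k')) (v' - v) x"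
            using beq[of x] False by (simp add: cscale_def field_simps)
        qed
        moreover have "cscale (inverse (k - k')) (v' - v) \<in> fvec.span B"
          by (intro fvec.span_scale fvec.span_diff v v')
        ultimately show ?thesis using nb by simp
      qed
    qed
    show "g ` (UNIV \<times> fvec.span B) = fvec.span (insert b B)"
    proof
      show "g ` (UNIV \<times> fvec.span B) \<subseteq> fvec.span (insert b B)"
      proof (clarsimp simp: g_def fvec.span_breakdown_eq)
        fix a c assume "c \<in> fvec.span B"
        then show "\<exists>k. cscale a b + c - cscale k b \<in> fvec.span B"
          by (intro exI[of _ a]) simp
      qed
      show "fvec.span (insert b B) \<subseteq> g ` (UNIV \<times> fvec.span B)"
      proof
        fix z assume "z \<in> fvec.span (insert b B)"
        then obtain k where k: "z - cscale k b \<in> fvec.span B"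
          by (auto simp: fvec.span_breakdown_eq)
        have "z = g (k, z - cscale k b)" by (simp add: g_def)
        then show "z \<in> g ` (UNIV \<times> fvec.span B)" using k by blast
      qed
    qed
  qed
  then have "card ((UNIV::'a set) \<times> fvec.span B) = card (fvec.span (insert b B))"
    by (rule bij_betw_same_card)
  then have "card (fvec.span (insert b B)) = card ((UNIV::'a set) \<times> fvec.span B)" by simp
  also have "\<dots> = CARD('a) * card (fvec.span B)" by (simp add: card_cartesian_product)
  also have "\<dots> = CARD('a) ^ card (insert b B)" using insert indB by simp
  finally show ?case .
qed

lemma card_subspace:
  fixes S :: "(nat \<Rightarrow> 'a::{field,finite}) set"
  assumes "fvec.subspace S" "finite S"
  shows "card S = CARD('a) ^ fvec.dim S"
proof -
  obtain B where B: "B \<subseteq> S" "fvec.independent B" "S \<subseteq> fvec.span B" "card B = fvec.dim S"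
    using fvec.basis_exists by blast
  have "fvec.span B = S" using B assms fvec.span_subspace by blast
  moreover have "finite B" using B assms finite_subset by blast
  ultimately show ?thesis using card_span_indep B by metis
qed

lemma card_fibers:
  fixes f :: "'b::ab_group_add \<Rightarrow> 'c::ab_group_add"
  assumes fin: "finite S" and S0: "0 \<in> S" and Sd: "\<And>x y. x\<in>S \<Longrightarrow> y\<in>S \<Longrightarrow> x - y \<in> S"
    and f: "\<And>x y. f (x - y) = f x - f y"
  shows "card S = card {v\<in>S. f v = 0} * card (f ` S)"
proof -
  have f0: "f 0 = 0" using f[of 0 0] by simp
  have fa: "f (x + y) = f x + f y" for x y
    using f[of x "0 - y"] f[of 0 y] f0 by simp
  have Sa: "x + y \<in> S" if "x \<in> S" "y \<in> S" for x y
    using Sd[OF that(1) Sd[OF S0 that(2)]] by simp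
  define K where "K = {v\<in>S. f v = 0}"
  have S_eq: "S = (\<Union>z\<in>f ` S. {v\<in>S. f v = z})" by auto
  have "card S = (\<Sum>z\<in>f ` S. card {v\<in>S. f v = z})"
    by (subst S_eq, rule card_UN_disjoint) (use fin in auto)
  also have "\<dots> = (\<Sum>z\<in>f ` S. card K)"
  proof (rule sum.cong[OF refl])
    fix z assume "z \<in> f ` S"
    then obtain s where s: "s \<in> S" "f s = z" by blast
    have "{v\<in>S. f v = z} = (\<lambda>k. s + k) ` K"
    proof
      show "{v\<in>S. f v = z} \<subseteq> (\<lambda>k. s + k) ` K"
      proof
        fix v assume v: "v \<in> {v\<in>S. f v = z}"
        then have "v - s \<in> K" using s Sd f by (auto simp: K_def)
        moreover have "v = s + (v - s)" by simp
        ultimately show "v \<in> (\<lambda>k. s + k) ` K" by blast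
      qed
      show "(\<lambda>k. s + k) ` K \<subseteq> {v\<in>S. f v = z}"
        using s Sa fa by (auto simp: K_def)
    qed
    then show "card {v\<in>S. f v = z} = card K"
      by (simp add: card_image inj_on_def)
  qed
  also have "\<dots> = card K * card (f ` S)" by simp
  finally show ?thesis by (simp add: K_def)
qed


lemma upd0: "v(m := 0) = 0 \<Longrightarrow> l \<noteq> m \<Longrightarrow> v l = 0"
  by (drule fun_cong[of _ _ l]) simp

lemma ortho_bound:
  fixes y :: "nat \<Rightarrow> 'a::{field,finite}"
  assumes "finite I"
    and "\<forall>l\<in>I. y l \<noteq> 0" "grp U" "grp W" "finite U" "finite W"
    and "\<forall>u\<in>U. \<forall>l. l \<notin> I \<longrightarrow> u l = 0" "\<forall>w\<in>W. \<forall>l. l \<notin> I \<longrightarrow> w l = 0"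
    and "\<forall>u\<in>U. \<forall>w\<in>W. (\<Sum>l\<in>I. u l * w l * y l) = 0"
  shows "card U * card W \<le> CARD('a) ^ card I"
  using assms
proof (induction I arbitrary: U W rule: finite_induct)
  case empty
  have U0: "U \<subseteq> {0}" and W0: "W \<subseteq> {0}" using empty.prems by (auto simp: fun_eq_iff)
  have "card U \<le> card {0::nat \<Rightarrow> 'a}" by (rule card_mono[OF _ U0]) simp
  moreover have "card W \<le> card {0::nat \<Rightarrow> 'a}" by (rule card_mono[OF _ W0]) simp
  ultimately have "card U \<le> 1" "card W \<le> 1" by auto
  then have "card U \<le> 1" "card W \<le> 1" by auto
  then have "card U * card W \<le> 1 * 1" by (intro mult_le_mono) auto
  then show ?case by simp
next
  case (insert m J)
  define q where "q = CARD('a)"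
  define \<pi> where "\<pi> = (\<lambda>v::nat \<Rightarrow> 'a. v(m := 0))"
  define U' where "U' = \<pi> ` U"
  have Ug: "0 \<in> U" "\<And>a b. a \<in> U \<Longrightarrow> b \<in> U \<Longrightarrow> a - b \<in> U" using insert.prems(2) by (auto simp: grp_def)
  have Wg: "0 \<in> W" "\<And>a b. a \<in> W \<Longrightarrow> b \<in> W \<Longrightarrow> a - b \<in> W" using insert.prems(3) by (auto simp: grp_def)
  have \<pi>d: "\<pi> (a - b) = \<pi> a - \<pi> b" for a b by (simp add: \<pi>_def fun_eq_iff)
  have U'g: "grp U'" unfolding grp_def U'_def
  proof (intro conjI ballI)
    have "0 = \<pi> 0" by (simp add: \<pi>_def fun_eq_iff)
    then show "0 \<in> \<pi> ` U" using Ug(1) by (rule image_eqI)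
    fix a b assume "a \<in> \<pi> ` U" "b \<in> \<pi> ` U"
    then obtain a0 b0 where "a0 \<in> U" "b0 \<in> U" "a = \<pi> a0" "b = \<pi> b0" by blast
    then have "a - b = \<pi> (a0 - b0)" using \<pi>d by simp
    moreover have "a0 - b0 \<in> U" using Ug(2) \<open>a0 \<in> U\<close> \<open>b0 \<in> U\<close> by blast
    ultimately show "a - b \<in> \<pi> ` U" by (rule image_eqI)
  qed
  have U'fin: "finite U'" using insert.prems(4) by (simp add: U'_def)
  have U'sup: "\<forall>u\<in>U'. \<forall>l. l \<notin> J \<longrightarrow> u l = 0"
    using insert.prems(6) by (auto simp: U'_def \<pi>_def)
  have sum_ins: "(\<Sum>l\<in>insert m J. u l * w l * y l) = u m * w m * y m + (\<Sum>l\<in>J. u l * w l * y l)" for u w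
    using insert.hyps by simp
  have sum_\<pi>: "(\<Sum>l\<in>J. \<pi> u l * w l * y l) = (\<Sum>l\<in>J. u l * w l * y l)" for u w
    using insert.hyps by (intro sum.cong) (auto simp: \<pi>_def)
  have yJ: "\<forall>l\<in>J. y l \<noteq> 0" using insert.prems(1) by simp
  have q1: "1 \<le> q" unfolding q_def by (simp add: Suc_le_eq)
  show ?case
  proof (cases "\<forall>w\<in>W. w m = 0")
    case True
    have Wsup: "\<forall>w\<in>W. \<forall>l. l \<notin> J \<longrightarrow> w l = 0" using True insert.prems(7) by (metis insert_iff)
    have orth: "\<forall>u\<in>U'. \<forall>w\<in>W. (\<Sum>l\<in>J. u l * w l * y l) = 0"
    proof (intro ballI)
      fix u w assume "u \<in> U'" "w \<in> W"
      then obtain u0 where u0: "u0 \<in> U" "u = \<pi> u0" by (auto simp: U'_def)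
      have "(\<Sum>l\<in>J. u l * w l * y l) = (\<Sum>l\<in>J. u0 l * w l * y l)" using u0 sum_\<pi> by simp
      also have "\<dots> = (\<Sum>l\<in>insert m J. u0 l * w l * y l)" using sum_ins[of u0 w] True \<open>w \<in> W\<close> by simp
      also have "\<dots> = 0" using insert.prems(8) u0 \<open>w \<in> W\<close> by blast
      finally show "(\<Sum>l\<in>J. u l * w l * y l) = 0" .
    qed
    have IH: "card U' * card W \<le> q ^ card J"
      using insert.IH[OF yJ U'g insert.prems(3) U'fin insert.prems(5) U'sup Wsup orth] by (simp add: q_def)
    define K where "K = {v\<in>U. \<pi> v = 0}"
    have cU: "card U = card K * card U'"
      unfolding K_def U'_def by (rule card_fibers, rule insert.prems(4), rule Ug(1), erule (1) Ug(2), rule \<pi>d)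
    have "inj_on (\<lambda>v. v m) K"
    proof (rule inj_onI)
      fix a b assume "a \<in> K" "b \<in> K" "a m = b m"
      then have "a(m := 0) = 0" "b(m := 0) = 0" "a m = b m" unfolding K_def \<pi>_def by auto
      show "a = b"
      proof (rule ext)
        fix l show "a l = b l"
          using upd0[OF \<open>a(m := 0) = 0\<close>, of l] upd0[OF \<open>b(m := 0) = 0\<close>, of l] \<open>a m = b m\<close>
          by (cases "l = m") auto
      qed
    qed
    then have "card K = card ((\<lambda>v. v m) ` K)" by (simp add: card_image)
    also have "\<dots> \<le> card (UNIV :: 'a set)" by (rule card_mono) simp_all
    finally have "card K \<le> q" unfolding q_def .
    then have "card U \<le> q * card U'" using cU by simp
    then have "card U * card W \<le> q * card U' * card W" by simp
    also have "\<dots> \<le> q * q ^ card J" using IH by (simp add: mult.assoc)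
    finally show ?thesis using insert.hyps by (simp add: q_def)
  next
    case False
    then obtain w0 where w0: "w0 \<in> W" "w0 m \<noteq> 0" by blast
    define W0 where "W0 = {w\<in>W. w m = 0}"
    have W0g: "grp W0" using Wg by (auto simp: grp_def W0_def)
    have W0fin: "finite W0" using insert.prems(5) by (simp add: W0_def)
    have W0sup: "\<forall>w\<in>W0. \<forall>l. l \<notin> J \<longrightarrow> w l = 0" using insert.prems(7) by (auto simp: W0_def)
    have orth: "\<forall>u\<in>U'. \<forall>w\<in>W0. (\<Sum>l\<in>J. u l * w l * y l) = 0"
    proof (intro ballI)
      fix u w assume "u \<in> U'" "w \<in> W0"
      then obtain u0 where u0: "u0 \<in> U" "u = \<pi> u0" by (auto simp: U'_def)
      have wW: "w \<in> W" "w m = 0" using \<open>w \<in> W0\<close> by (auto simp: W0_def)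
      have "(\<Sum>l\<in>J. u l * w l * y l) = (\<Sum>l\<in>J. u0 l * w l * y l)" using u0 sum_\<pi> by simp
      also have "\<dots> = (\<Sum>l\<in>insert m J. u0 l * w l * y l)" using sum_ins[of u0 w] wW by simp
      also have "\<dots> = 0" using insert.prems(8) u0 wW by blast
      finally show "(\<Sum>l\<in>J. u l * w l * y l) = 0" .
    qed
    have IH: "card U' * card W0 \<le> q ^ card J"
      using insert.IH[OF yJ U'g W0g U'fin W0fin U'sup W0sup orth] by (simp add: q_def)
    have cW: "card W = card W0 * card ((\<lambda>w. w m) ` W)"
      unfolding W0_def by (rule card_fibers, rule insert.prems(5), rule Wg(1), erule (1) Wg(2), simp)
    have "card ((\<lambda>w. w m) ` W) \<le> q" unfolding q_def by (rule card_mono) auto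
    then have cW': "card W \<le> card W0 * q" using cW by simp
    have "inj_on \<pi> U"
    proof (rule inj_onI)
      fix a b assume ab: "a \<in> U" "b \<in> U" "\<pi> a = \<pi> b"
      define v where "v = a - b"
      have vU: "v \<in> U" using ab Ug by (simp add: v_def)
      have "\<pi> v = 0" using ab(3) \<pi>d by (simp add: v_def)
      then have vz: "\<forall>l. l \<noteq> m \<longrightarrow> v l = 0" unfolding \<pi>_def by (auto dest: upd0)
      have "(\<Sum>l\<in>J. v l * w0 l * y l) = 0" using vz insert.hyps by (intro sum.neutral) auto
      then have "v m * w0 m * y m = 0" using sum_ins[of v w0] insert.prems(8) vU w0 by simp
      then have "v m = 0" using w0 insert.prems(1) by simp
      then have "v = 0" using vz by (auto simp: fun_eq_iff)
      then show "a = b" by (simp add: v_def)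
    qed
    then have "card U' = card U" by (simp add: U'_def card_image)
    have "card U * card W \<le> card U' * (card W0 * q)" using cW' \<open>card U' = card U\<close> by simp
    also have "\<dots> = (card U' * card W0) * q" by simp
    also have "\<dots> \<le> q ^ card J * q" using IH by simp
    finally show ?thesis using insert.hyps by (simp add: q_def mult.commute)
  qed
qed


lemma subspace_restr:
  assumes "fvec.subspace C"
  shows "fvec.subspace {c\<in>C. \<forall>l. Q l \<longrightarrow> c l = 0}"
  using assms unfolding fvec.subspace_def by (auto simp: cscale_def)

lemma subspace_grp: "fvec.subspace S \<Longrightarrow> grp S"
  unfolding grp_def using fvec.subspace_diff fvec.subspace_0 by blast

lemma grp_image:
  assumes "grp S" "\<And>a b. g (a - b) = g a - g b"
  shows "grp (g ` S)"
  unfolding grp_def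
proof (intro conjI ballI)
  have "g 0 = 0" using assms(2)[of 0 0] by simp
  then have "0 = g 0" by simp
  then show "0 \<in> g ` S" using assms(1) unfolding grp_def by (intro image_eqI) auto
  fix a b assume "a \<in> g ` S" "b \<in> g ` S"
  then obtain a0 b0 where ab: "a0 \<in> S" "b0 \<in> S" "a = g a0" "b = g b0" by blast
  then have "a - b = g (a0 - b0)" using assms(2) by simp
  moreover have "a0 - b0 \<in> S" using ab assms(1) unfolding grp_def by blast
  ultimately show "a - b \<in> g ` S" by (rule image_eqI)
qed

lemma subspace_image:
  assumes "fvec.subspace S" "\<And>a b. g (a + b) = g a + g b" "\<And>c a. g (cscale c a) = cscale c (g a)"
  shows "fvec.subspace (g ` S)"
proof (rule fvec.subspaceI)
  have "g 0 = 0" using assms(2)[of 0 0] by simp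
  then have "0 = g 0" by simp
  then show "0 \<in> g ` S" using fvec.subspace_0[OF assms(1)] by (rule image_eqI)
next
  fix a b assume "a \<in> g ` S" "b \<in> g ` S"
  then obtain a0 b0 where ab: "a0 \<in> S" "b0 \<in> S" "a = g a0" "b = g b0" by blast
  then have "a + b = g (a0 + b0)" using assms(2) by simp
  moreover have "a0 + b0 \<in> S" using ab fvec.subspace_add[OF assms(1)] by blast
  ultimately show "a + b \<in> g ` S" by (rule image_eqI)
next
  fix c a assume "a \<in> g ` S"
  then obtain a0 where ab: "a0 \<in> S" "a = g a0" by blast
  then have "cscale c a = g (cscale c a0)" using assms(3) by simp
  moreover have "cscale c a0 \<in> S" using ab fvec.subspace_scale[OF assms(1)] by blast
  ultimately show "cscale c a \<in> g ` S" by (rule image_eqI)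
qed

lemma card_field_ge2: "2 \<le> CARD('a::{field,finite})"
proof -
  have "card {0::'a, 1} = 2" by simp
  moreover have "card {0::'a, 1} \<le> CARD('a)" by (rule card_mono) simp_all
  ultimately show ?thesis by simp
qed

lemma card_fibers_grp:
  fixes f :: "(nat \<Rightarrow> 'a::ab_group_add) \<Rightarrow> 'c::ab_group_add"
  assumes "finite S" "grp S" "\<And>x y. f (x - y) = f x - f y"
  shows "card S = card {v\<in>S. f v = 0} * card (f ` S)"
proof (rule card_fibers)
  show "finite S" by fact
  show "0 \<in> S" using assms(2) by (simp add: grp_def)
  show "x - y \<in> S" if "x \<in> S" "y \<in> S" for x y using assms(2) that by (simp add: grp_def)
  show "f (x - y) = f x - f y" for x y by (rule assms(3))
qed

definition orth :: "nat \<Rightarrow> (nat \<Rightarrow> 'a::field) \<Rightarrow> (nat \<Rightarrow> 'a) set \<Rightarrow> bool" where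
  "orth n x C \<longleftrightarrow> (\<forall>l<n. x l \<noteq> 0) \<and> (\<forall>a\<in>C. \<forall>b\<in>C. (\<Sum>l<n. a l * b l * inverse (x l)) = 0)"

lemma card_prefix:
  fixes C :: "(nat \<Rightarrow> 'a::{field,finite}) set"
  assumes sub: "fvec.subspace C" and W: "C \<subseteq> words n"
  shows "card (prefix_code n C k) = CARD('a) ^ p_dim n C k"
proof -
  have "fvec.subspace (prefix_code n C k)"
    unfolding prefix_code_def using subspace_restr[OF sub, of "\<lambda>l. k \<le> l"] by simp
  moreover have "finite (prefix_code n C k)"
    using W finite_words[of n] by (rule_tac finite_subset[of _ "words n"]) (auto simp: prefix_code_def)
  ultimately show ?thesis unfolding p_dim_def cdim_def by (rule card_subspace)
qed

lemma card_suffix: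
  fixes C :: "(nat \<Rightarrow> 'a::{field,finite}) set"
  assumes sub: "fvec.subspace C" and W: "C \<subseteq> words n"
  shows "card {c\<in>C. \<forall>l<k. c l = 0} = CARD('a) ^ f_dim n C k"
proof -
  define B where "B = {c\<in>C. \<forall>l<k. c l = 0}"
  define sh where "sh = (\<lambda>c::nat \<Rightarrow> 'a. (\<lambda>j. c (j + k)))"
  have sc: "suffix_code n C k = sh ` B" by (simp add: suffix_code_def sh_def B_def)
  have subB: "fvec.subspace B"
    unfolding B_def using subspace_restr[OF sub, of "\<lambda>l. l < k"] by simp
  have finB: "finite B"
    using W finite_words[of n] by (rule_tac finite_subset[of _ "words n"]) (auto simp: B_def)
  have "inj_on sh B"
  proof (rule inj_onI)
    fix a b assume ab: "a \<in> B" "b \<in> B" "sh a = sh b"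
    show "a = b"
    proof (rule ext)
      fix l show "a l = b l"
      proof (cases "l < k")
        case True then show ?thesis using ab by (simp add: B_def)
      next
        case False
        then have "l = (l - k) + k" by simp
        moreover have "a ((l - k) + k) = b ((l - k) + k)" using ab(3) by (simp add: sh_def fun_eq_iff)
        ultimately show ?thesis by metis
      qed
    qed
  qed
  then have "card (suffix_code n C k) = card B" by (simp add: sc card_image)
  moreover have "card (suffix_code n C k) = CARD('a) ^ f_dim n C k"
    unfolding f_dim_def cdim_def
  proof (rule card_subspace)
    show "fvec.subspace (suffix_code n C k)" unfolding sc
      by (rule subspace_image[OF subB]) (simp_all add: sh_def cscale_def fun_eq_iff)
    show "finite (suffix_code n C k)" unfolding sc using finB by simp
  qed
  ultimately show ?thesis by (simp add: B_def)
qed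

lemma part1:
  fixes C :: "(nat \<Rightarrow> 'a::{field,finite}) set"
  assumes sub: "fvec.subspace C" and W: "C \<subseteq> words n" and o: "orth n x C"
    and ij: "i \<le> j" "j \<le> n"
  shows "p_dim n C j + f_dim n C i \<le> p_dim n C i + f_dim n C j + (j - i)"
proof -
  define q where "q = CARD('a)"
  define P where "P k = prefix_code n C k" for k
  define B where "B k = {c\<in>C. \<forall>l<k. c l = 0}" for k
  define \<pi> where "\<pi> = (\<lambda>v::nat \<Rightarrow> 'a. (\<lambda>l. if i \<le> l \<and> l < j then v l else 0))"
  have \<pi>d: "\<pi> (a - b) = \<pi> a - \<pi> b" for a b by (simp add: \<pi>_def fun_eq_iff)
  have subP: "fvec.subspace (P k)" for k
    unfolding P_def prefix_code_def using subspace_restr[OF sub, of "\<lambda>l. k \<le> l"] by simp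
  have subB: "fvec.subspace (B k)" for k
    unfolding B_def using subspace_restr[OF sub, of "\<lambda>l. l < k"] by simp
  have finC: "finite C" using W finite_words[of n] finite_subset by blast
  have finP: "finite (P k)" for k using finC by (simp add: P_def prefix_code_def)
  have finB: "finite (B k)" for k using finC by (simp add: B_def)
  have gP: "grp (P k)" for k by (rule subspace_grp[OF subP])
  have gB: "grp (B k)" for k by (rule subspace_grp[OF subB])
  have cP: "card (P k) = q ^ p_dim n C k" for k
    unfolding P_def q_def by (rule card_prefix[OF sub W])
  have cB: "card (B k) = q ^ f_dim n C k" for k
    unfolding B_def q_def by (rule card_suffix[OF sub W])
  have kP: "{v\<in>P j. \<pi> v = 0} = P i"
  proof
    show "{v\<in>P j. \<pi> v = 0} \<subseteq> P i"
    proof clarify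
      fix v assume v: "v \<in> P j" "\<pi> v = 0"
      have "v l = 0" if "i \<le> l" for l
      proof (cases "l < j")
        case True
        then show ?thesis using fun_cong[OF v(2), of l] that by (simp add: \<pi>_def)
      next
        case False then show ?thesis using v(1) by (simp add: P_def prefix_code_def)
      qed
      then show "v \<in> P i" using v(1) by (simp add: P_def prefix_code_def)
    qed
    show "P i \<subseteq> {v\<in>P j. \<pi> v = 0}"
    proof
      fix v assume v: "v \<in> P i"
      have vi: "\<And>l. i \<le> l \<Longrightarrow> v l = 0" "v \<in> C" using v by (simp_all add: P_def prefix_code_def)
      have "v \<in> P j" using vi ij by (simp add: P_def prefix_code_def)
      moreover have "\<pi> v = 0" by (rule ext) (simp add: \<pi>_def vi)
      ultimately show "v \<in> {v\<in>P j. \<pi> v = 0}" by simp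
    qed
  qed
  have kB: "{v\<in>B i. \<pi> v = 0} = B j"
  proof
    show "{v\<in>B i. \<pi> v = 0} \<subseteq> B j"
    proof clarify
      fix v assume v: "v \<in> B i" "\<pi> v = 0"
      have "v l = 0" if "l < j" for l
      proof (cases "i \<le> l")
        case True
        then show ?thesis using fun_cong[OF v(2), of l] that by (simp add: \<pi>_def)
      next
        case False then show ?thesis using v(1) by (simp add: B_def)
      qed
      then show "v \<in> B j" using v(1) by (simp add: B_def)
    qed
    show "B j \<subseteq> {v\<in>B i. \<pi> v = 0}"
    proof
      fix v assume v: "v \<in> B j"
      have vi: "\<And>l. l < j \<Longrightarrow> v l = 0" "v \<in> C" using v by (simp_all add: B_def)
      have "v \<in> B i" using vi ij by (simp add: B_def)
      moreover have "\<pi> v = 0" by (rule ext) (simp add: \<pi>_def vi)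
      ultimately show "v \<in> {v\<in>B i. \<pi> v = 0}" by simp
    qed
  qed
  have c1: "card (P j) = card (P i) * card (\<pi> ` P j)"
    using card_fibers_grp[OF finP gP \<pi>d] kP by simp
  have c2: "card (B i) = card (B j) * card (\<pi> ` B i)"
    using card_fibers_grp[OF finB gB \<pi>d] kB by simp
  have ob: "card (\<pi> ` P j) * card (\<pi> ` B i) \<le> q ^ card {i..<j}"
    unfolding q_def
  proof (rule ortho_bound[where y = "\<lambda>l. inverse (x l)"])
    show "\<forall>l\<in>{i..<j}. inverse (x l) \<noteq> 0" using o ij by (auto simp: orth_def)
    show "grp (\<pi> ` P j)" by (rule grp_image[OF gP \<pi>d])
    show "grp (\<pi> ` B i)" by (rule grp_image[OF gB \<pi>d])
    show "finite (\<pi> ` P j)" using finP by simp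
    show "finite (\<pi> ` B i)" using finB by simp
    show "\<forall>u\<in>\<pi> ` P j. \<forall>l. l \<notin> {i..<j} \<longrightarrow> u l = 0" by (auto simp: \<pi>_def)
    show "\<forall>u\<in>\<pi> ` B i. \<forall>l. l \<notin> {i..<j} \<longrightarrow> u l = 0" by (auto simp: \<pi>_def)
    show "\<forall>u\<in>\<pi> ` P j. \<forall>w\<in>\<pi> ` B i. (\<Sum>l\<in>{i..<j}. u l * w l * inverse (x l)) = 0"
    proof clarify
      fix a b assume a: "a \<in> P j" and b: "b \<in> B i"
      have aC: "a \<in> C" and a0: "\<And>l. j \<le> l \<Longrightarrow> a l = 0" using a by (auto simp: P_def prefix_code_def)
      have bC: "b \<in> C" and b0: "\<And>l. l < i \<Longrightarrow> b l = 0" using b by (auto simp: B_def)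
      have "(\<Sum>l\<in>{i..<j}. \<pi> a l * \<pi> b l * inverse (x l)) = (\<Sum>l\<in>{i..<j}. a l * b l * inverse (x l))"
        by (intro sum.cong) (auto simp: \<pi>_def)
      also have "\<dots> = (\<Sum>l<n. a l * b l * inverse (x l))"
      proof (rule sum.mono_neutral_left)
        show "finite {..<n}" by simp
        show "{i..<j} \<subseteq> {..<n}" using ij by auto
        show "\<forall>l\<in>{..<n} - {i..<j}. a l * b l * inverse (x l) = 0"
        proof
          fix l assume "l \<in> {..<n} - {i..<j}"
          then have "l < i \<or> j \<le> l" by auto
          then show "a l * b l * inverse (x l) = 0" using a0 b0 by auto
        qed
      qed
      also have "\<dots> = 0" using o aC bC by (auto simp: orth_def)
      finally show "(\<Sum>l\<in>{i..<j}. \<pi> a l * \<pi> b l * inverse (x l)) = 0" .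
    qed
  qed simp
  have "q ^ (p_dim n C j + f_dim n C i) = card (P j) * card (B i)"
    by (simp add: cP cB power_add)
  also have "\<dots> = card (P i) * card (B j) * (card (\<pi> ` P j) * card (\<pi> ` B i))"
    using c1 c2 by (simp add: algebra_simps)
  also have "\<dots> \<le> card (P i) * card (B j) * q ^ (j - i)"
    using ob by (intro mult_le_mono2) simp
  also have "\<dots> = q ^ (p_dim n C i + f_dim n C j + (j - i))"
    by (simp add: cP cB power_add)
  finally have le: "q ^ (p_dim n C j + f_dim n C i) \<le> q ^ (p_dim n C i + f_dim n C j + (j - i))" .
  have q1: "1 < q" using card_field_ge2[where 'a='a] unfolding q_def by simp
  show ?thesis by (rule power_le_imp_le_exp[OF q1 le])
qed


lemma dim_zero_if_card1:
  assumes "card S = CARD('a::{field,finite}) ^ k" "card S = 1"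
  shows "k = 0"
proof (rule ccontr)
  assume "k \<noteq> 0"
  then have "CARD('a) ^ 1 \<le> CARD('a) ^ k"
    using card_field_ge2[where 'a='a] by (intro power_increasing) auto
  then show False using assms card_field_ge2[where 'a='a] by simp
qed

lemma part2:
  fixes C :: "(nat \<Rightarrow> 'a::{field,finite}) set"
  assumes sub: "fvec.subspace C" and W: "C \<subseteq> words n" and o: "orth n x C"
    and wt: "\<forall>c\<in>C. c \<noteq> 0 \<longrightarrow> d \<le> weight n c" and d1: "1 \<le> d" and dn: "2 * d \<le> n + 1"
  shows "int (Delta n C) \<le> (int n - 2 * int d + 2) div 2"
proof -
  define i0 where "i0 = d - 1"
  define j0 where "j0 = n + 1 - d"
  have ij: "i0 \<le> j0" "j0 \<le> n" using d1 dn by (auto simp: i0_def j0_def)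
  have C0: "0 \<in> C" using sub by (rule fvec.subspace_0)
  have Pz: "prefix_code n C i0 = {0}"
  proof
    show "{0} \<subseteq> prefix_code n C i0" using C0 by (simp add: prefix_code_def)
    show "prefix_code n C i0 \<subseteq> {0}"
    proof
      fix c assume c: "c \<in> prefix_code n C i0"
      then have cC: "c \<in> C" and cz: "\<And>l. i0 \<le> l \<Longrightarrow> c l = 0" by (auto simp: prefix_code_def)
      have "{l. l < n \<and> c l \<noteq> 0} \<subseteq> {..<i0}" using cz by (auto simp: not_less[symmetric])
      then have "weight n c \<le> i0" unfolding weight_def using card_mono[of "{..<i0}"] by fastforce
      then have "\<not> d \<le> weight n c" using d1 by (simp add: i0_def)
      then show "c \<in> {0}" using wt cC by auto
    qed
  qed
  have Bz: "{c\<in>C. \<forall>l<j0. c l = 0} = {0}"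
  proof
    show "{0} \<subseteq> {c\<in>C. \<forall>l<j0. c l = 0}" using C0 by simp
    show "{c\<in>C. \<forall>l<j0. c l = 0} \<subseteq> {0}"
    proof
      fix c assume c: "c \<in> {c\<in>C. \<forall>l<j0. c l = 0}"
      then have cC: "c \<in> C" and cz: "\<And>l. l < j0 \<Longrightarrow> c l = 0" by auto
      have "{l. l < n \<and> c l \<noteq> 0} \<subseteq> {j0..<n}" using cz by (auto simp: not_less[symmetric])
      then have "weight n c \<le> card {j0..<n}" unfolding weight_def by (intro card_mono) auto
      then have "weight n c \<le> d - 1" using d1 dn by (simp add: j0_def)
      then have "\<not> d \<le> weight n c" using d1 by simp
      then show "c \<in> {0}" using wt cC by auto
    qed
  qed
  have p0: "p_dim n C i0 = 0"
    using card_prefix[OF sub W, of i0] Pz by (intro dim_zero_if_card1[where S = "prefix_code n C i0"]) auto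
  have f0: "f_dim n C j0 = 0"
    using card_suffix[OF sub W, of j0] Bz by (intro dim_zero_if_card1[where S = "{c\<in>C. \<forall>l<j0. c l = 0}"]) auto
  have key: "p_dim n C j0 + f_dim n C i0 \<le> j0 - i0"
    using part1[OF sub W o ij] p0 f0 by simp
  have fin: "finite {p_dim n C i + f_dim n C i | i. i \<le> n}" by (rule finite_image_set) simp
  have D1: "Delta n C \<le> p_dim n C i0 + f_dim n C i0"
    unfolding Delta_def using ij by (intro Min_le[OF fin]) auto
  have D2: "Delta n C \<le> p_dim n C j0 + f_dim n C j0"
    unfolding Delta_def using ij by (intro Min_le[OF fin]) auto
  have "2 * Delta n C \<le> j0 - i0" using D1 D2 key p0 f0 by simp
  then have "2 * int (Delta n C) \<le> int n - 2 * int d + 2" using d1 dn by (simp add: i0_def j0_def)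
  then show ?thesis by presburger
qed


lemma permute_props:
  fixes C :: "(nat \<Rightarrow> 'a::{field,finite}) set"
  assumes sub: "fvec.subspace C" and W: "C \<subseteq> words n" and o: "orth n x C"
    and wt: "\<forall>c\<in>C. c \<noteq> 0 \<longrightarrow> d \<le> weight n c"
    and \<sigma>: "\<sigma> permutes {0..<n}"
  shows "fvec.subspace (permute_code \<sigma> C)" "permute_code \<sigma> C \<subseteq> words n"
    "orth n (x \<circ> \<sigma>) (permute_code \<sigma> C)"
    "\<forall>c\<in>permute_code \<sigma> C. c \<noteq> 0 \<longrightarrow> d \<le> weight n c"
proof -
  have inS: "\<sigma> l < n \<longleftrightarrow> l < n" for l using permutes_in_image[OF \<sigma>, of l] by simp
  have outS: "\<sigma> l = l" if "\<not> l < n" for l using permutes_not_in[OF \<sigma>] that by simp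
  have img: "\<sigma> ` {..<n} = {..<n}" using permutes_image[OF \<sigma>] by (simp add: atLeast0LessThan)
  have inj: "inj_on \<sigma> {..<n}" using permutes_inj_on[OF \<sigma>] by blast
  show "fvec.subspace (permute_code \<sigma> C)" unfolding permute_code_def
    by (rule subspace_image[OF sub]) (simp_all add: fun_eq_iff cscale_def)
  show "permute_code \<sigma> C \<subseteq> words n"
  proof
    fix v assume "v \<in> permute_code \<sigma> C"
    then obtain c where c: "c \<in> C" "v = c \<circ> \<sigma>" by (auto simp: permute_code_def)
    have "v l = 0" if "n \<le> l" for l
      using c W outS[of l] that by (auto simp: words_def)
    then show "v \<in> words n" by (simp add: words_def)
  qed
  have sumre: "(\<Sum>l<n. g (\<sigma> l)) = (\<Sum>l<n. g l)" for g :: "nat \<Rightarrow> 'a"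
  proof -
    have "(\<Sum>l<n. g l) = (\<Sum>l\<in>\<sigma> ` {..<n}. g l)" by (simp add: img)
    also have "\<dots> = (\<Sum>l<n. g (\<sigma> l))" by (simp add: sum.reindex[OF inj])
    finally show ?thesis by simp
  qed
  show "orth n (x \<circ> \<sigma>) (permute_code \<sigma> C)"
    unfolding orth_def
  proof (intro conjI allI impI ballI)
    fix l assume "l < n" then show "(x \<circ> \<sigma>) l \<noteq> 0" using o inS[of l] by (simp add: orth_def)
  next
    fix a b assume "a \<in> permute_code \<sigma> C" "b \<in> permute_code \<sigma> C"
    then obtain a0 b0 where ab: "a0 \<in> C" "b0 \<in> C" "a = a0 \<circ> \<sigma>" "b = b0 \<circ> \<sigma>"
      by (auto simp: permute_code_def)
    have "(\<Sum>l<n. a l * b l * inverse ((x \<circ> \<sigma>) l)) = (\<Sum>l<n. a0 l * b0 l * inverse (x l))"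
      using sumre[of "\<lambda>l. a0 l * b0 l * inverse (x l)"] by (simp add: ab)
    also have "\<dots> = 0" using o ab by (simp add: orth_def)
    finally show "(\<Sum>l<n. a l * b l * inverse ((x \<circ> \<sigma>) l)) = 0" .
  qed
  show "\<forall>c\<in>permute_code \<sigma> C. c \<noteq> 0 \<longrightarrow> d \<le> weight n c"
  proof (intro ballI impI)
    fix v assume "v \<in> permute_code \<sigma> C" "v \<noteq> 0"
    then obtain c where c: "c \<in> C" "v = c \<circ> \<sigma>" by (auto simp: permute_code_def)
    have "c \<noteq> 0" using c \<open>v \<noteq> 0\<close> by auto
    have "\<sigma> ` {l. l < n \<and> v l \<noteq> 0} = {l. l < n \<and> c l \<noteq> 0}"
    proof
      show "\<sigma> ` {l. l < n \<and> v l \<noteq> 0} \<subseteq> {l. l < n \<and> c l \<noteq> 0}" using c inS by auto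
      show "{l. l < n \<and> c l \<noteq> 0} \<subseteq> \<sigma> ` {l. l < n \<and> v l \<noteq> 0}"
      proof
        fix l assume l: "l \<in> {l. l < n \<and> c l \<noteq> 0}"
        then have "l \<in> \<sigma> ` {..<n}" using img by simp
        then obtain l' where "l' < n" "l = \<sigma> l'" by auto
        then show "l \<in> \<sigma> ` {l. l < n \<and> v l \<noteq> 0}" using l c by auto
      qed
    qed
    moreover have "card (\<sigma> ` {l. l < n \<and> v l \<noteq> 0}) = card {l. l < n \<and> v l \<noteq> 0}"
      by (rule card_image, rule permutes_inj_on[OF \<sigma>])
    ultimately have "weight n v = weight n c" unfolding weight_def by simp
    then show "d \<le> weight n v" using wt c \<open>c \<noteq> 0\<close> by simp
  qed
qed

theorem proposition4p4:
  fixes C :: "(nat \<Rightarrow> 'a::{field,finite}) set" and n d :: nat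
  assumes "linear_code n C"
    and "formally_self_orthogonal n C"
    and "C \<noteq> {0}"
    and "d = min_dist n C"
    and "2 * d \<le> n + 1"
  shows "(\<forall>i j. i \<le> j \<and> j \<le> n \<longrightarrow>
            (int (p_dim n C j) - int (p_dim n C i)) + (int (f_dim n C i) - int (f_dim n C j))
              \<le> int j - int i)
         \<and> int (Delta_perm n C) \<le> (int n - 2 * int d + 2) div 2"
proof -
  have sub: "fvec.subspace C" and W: "C \<subseteq> words n" using assms(1) by (auto simp: linear_code_def)
  obtain x where x0: "\<forall>i<n. x i \<noteq> 0" and xC: "C \<subseteq> (\<lambda>v. (\<lambda>i. x i * v i)) ` dual_code n C"
    using assms(2) unfolding formally_self_orthogonal_def by blast
  have o: "orth n x C" unfolding orth_def
  proof (intro conjI ballI)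
    show "\<forall>l<n. x l \<noteq> 0" by fact
    fix a b assume a: "a \<in> C" and b: "b \<in> C"
    then obtain v where v: "v \<in> dual_code n C" "a = (\<lambda>i. x i * v i)" using xC by blast
    have "(\<Sum>l<n. a l * b l * inverse (x l)) = (\<Sum>l<n. v l * b l)"
      using x0 by (intro sum.cong) (auto simp: v(2))
    also have "\<dots> = 0" using v(1) b by (simp add: dual_code_def)
    finally show "(\<Sum>l<n. a l * b l * inverse (x l)) = 0" .
  qed
  have finC: "finite C" using W finite_words[of n] finite_subset by blast
  have finS: "finite {weight n c | c. c \<in> C \<and> c \<noteq> 0}"
    using finC by (rule_tac finite_subset[of _ "weight n ` C"]) auto
  have wt: "\<forall>c\<in>C. c \<noteq> 0 \<longrightarrow> d \<le> weight n c"
    unfolding assms(4) min_dist_def using finS by (auto intro: Min_le)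
  obtain c0 where c0: "c0 \<in> C" "c0 \<noteq> 0"
    using assms(3) fvec.subspace_0[OF sub] by blast
  have "{weight n c | c. c \<in> C \<and> c \<noteq> 0} \<noteq> {}" using c0 by blast
  then have "d \<in> {weight n c | c. c \<in> C \<and> c \<noteq> 0}"
    unfolding assms(4) min_dist_def using finS by (rule_tac Min_in) auto
  then obtain c where c: "c \<in> C" "c \<noteq> 0" "d = weight n c" by blast
  obtain l where l: "c l \<noteq> 0" using c(2) by (auto simp: fun_eq_iff)
  have "l < n" using l c(1) W by (auto simp: words_def not_less[symmetric])
  then have "{l. l < n \<and> c l \<noteq> 0} \<noteq> {}" using l by blast
  then have d1: "1 \<le> d" using c(3) unfolding weight_def
    by (simp add: Suc_le_eq card_gt_0_iff)
  have P1: "\<forall>i j. i \<le> j \<and> j \<le> n \<longrightarrow>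
            (int (p_dim n C j) - int (p_dim n C i)) + (int (f_dim n C i) - int (f_dim n C j))
              \<le> int j - int i"
  proof (intro allI impI)
    fix i j assume "i \<le> j \<and> j \<le> n"
    then have ij: "i \<le> j" "j \<le> n" by auto
    have "p_dim n C j + f_dim n C i \<le> p_dim n C i + f_dim n C j + (j - i)"
      by (rule part1[OF sub W o ij])
    then have "int (p_dim n C j + f_dim n C i) \<le> int (p_dim n C i + f_dim n C j + (j - i))"
      by (simp only: of_nat_le_iff)
    then show "(int (p_dim n C j) - int (p_dim n C i)) + (int (f_dim n C i) - int (f_dim n C j))
              \<le> int j - int i" using ij by (simp add: of_nat_diff)
  qed
  define S where "S = {Delta n (permute_code \<sigma> C) | \<sigma>. \<sigma> permutes {0..<n}}"
  have finS': "finite S" unfolding S_def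
    by (rule finite_image_set) (rule finite_permutations, simp)
  have "S \<noteq> {}" unfolding S_def using permutes_id by blast
  then have "Max S \<in> S" using finS' by (intro Max_in) auto
  then obtain \<sigma> where \<sigma>: "\<sigma> permutes {0..<n}" "Delta_perm n C = Delta n (permute_code \<sigma> C)"
    unfolding Delta_perm_def S_def by auto
  note pp = permute_props[OF sub W o wt \<sigma>(1)]
  have "int (Delta n (permute_code \<sigma> C)) \<le> (int n - 2 * int d + 2) div 2"
    by (rule part2[OF pp d1 assms(5)])
  then show ?thesis using P1 \<sigma>(2) by simp
qed

end
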